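(* Let $\mathcal{X}=\{\boldsymbol{x}_1,\dots,\boldsymbol{x}_N\}\subseteq\mathbb{R}^D$ with $\|\boldsymbol{x}_j\|_2=1$ for all $j$, and let $\lambda\in(1,\infty)$. For each $j\in\{1,\dots,N\}$: (i) for every $\mathcal{X}_0\subseteq\mathcal{X}$, $f_\lambda(\boldsymbol{x}_j,\mathcal{X}_0)\in[1-\frac{1}{2\lambda},\frac{\lambda}{2}]$; (ii) $f_\lambda(\boldsymbol{x}_j,\emptyset)=\lambda/2$; (iii) for $\mathcal{X}_0\subseteq\mathcal{X}$, $f_\lambda(\boldsymbol{x}_j,\mathcal{X}_0)=1-\frac{1}{2\lambda}$ if and only if at least one of $\boldsymbol{x}_j$ or $-\boldsymbol{x}_j$ belongs to $\mathcal{X}_0$.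
   Context: For $\mathcal{X}_0\subseteq\mathcal{X}$ nonempty and $\boldsymbol{x}_j\in\mathcal{X}$, define $f_\lambda(\boldsymbol{x}_j,\mathcal{X}_0):=\min_{\boldsymbol{c}\in\mathbb{R}^N}\|\boldsymbol{c}\|_1+\frac{\lambda}{2}\|\boldsymbol{x}_j-\sum_{i:\boldsymbol{x}_i\in\mathcal{X}_0}c_i\boldsymbol{x}_i\|_2^2$, and by convention $f_\lambda(\boldsymbol{x}_j,\emptyset):=\lambda/2$. *)

theory Defs
  imports "HOL-Analysis.Analysis"
begin

text \<open>The data set is indexed by i < N (0-based): x :: nat => 'a, with 'a a Euclidean space (R^D).
  Coefficient vectors c in R^N are functions nat => real, only c i for i < N matter.
  f_lambda(x_j, X0) = min over c of ||c||_1 + lam/2 * ||x_j - sum_{i : x_i in X0} c_i x_i||^2,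
  written as an infimum (the minimum is attained); f_lambda(x_j, {}) = lam/2 by convention.\<close>

definition f_lam :: "real \<Rightarrow> nat \<Rightarrow> (nat \<Rightarrow> 'a::euclidean_space) \<Rightarrow> 'a \<Rightarrow> 'a set \<Rightarrow> real" where
  "f_lam lam N x xj X0 =
     (if X0 = {} then lam / 2
      else Inf {(\<Sum>i<N. \<bar>c i\<bar>) + lam / 2 * (norm (xj - (\<Sum>i\<in>{i. i < N \<and> x i \<in> X0}. c i *\<^sub>R x i)))\<^sup>2
                | c :: nat \<Rightarrow> real. True})"

end

theory Submission
  imports Defs
begin

lemma inner_bound:
  fixes x :: "nat \<Rightarrow> 'a::euclidean_space"
  assumes "finite I" "I \<subseteq> {..<N}" "\<forall>i\<in>I. \<bar>x i \<bullet> y\<bar> \<le> r" "r \<ge> 0"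
  shows "\<bar>(\<Sum>i\<in>I. c i *\<^sub>R x i) \<bullet> y\<bar> \<le> r * (\<Sum>i<N. \<bar>c i\<bar>)"
proof -
  have "(\<Sum>i\<in>I. c i *\<^sub>R x i) \<bullet> y = (\<Sum>i\<in>I. c i * (x i \<bullet> y))"
    by (simp add: inner_sum_left)
  also have "\<bar>\<dots>\<bar> \<le> (\<Sum>i\<in>I. \<bar>c i\<bar> * \<bar>x i \<bullet> y\<bar>)"
    by (metis (no_types, lifting) abs_mult sum_abs sum.cong)
  also have "\<dots> \<le> (\<Sum>i\<in>I. \<bar>c i\<bar> * r)"
    by (rule sum_mono) (use assms(3) in \<open>auto intro: mult_left_mono\<close>)
  also have "\<dots> = r * (\<Sum>i\<in>I. \<bar>c i\<bar>)" by (simp add: sum_distrib_left mult.commute)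
  also have "\<dots> \<le> r * (\<Sum>i<N. \<bar>c i\<bar>)"
    by (rule mult_left_mono[OF sum_mono2]) (use assms in auto)
  finally show ?thesis .
qed

lemma norm_bound:
  fixes y S :: "'a::euclidean_space"
  assumes "norm y = 1"
  shows "(1 - S \<bullet> y)\<^sup>2 \<le> (norm (y - S))\<^sup>2"
proof -
  have yy: "y \<bullet> y = 1" using assms by (simp add: dot_square_norm)
  have "1 - S \<bullet> y = y \<bullet> (y - S)" using yy by (simp add: inner_diff_right inner_commute)
  moreover have "\<bar>y \<bullet> (y - S)\<bar> \<le> norm (y - S)"
    using Cauchy_Schwarz_ineq2[of y "y - S"] assms by simp
  ultimately have "\<bar>1 - S \<bullet> y\<bar> \<le> norm (y - S)" by simp
  then have "\<bar>1 - S \<bullet> y\<bar>\<^sup>2 \<le> (norm (y - S))\<^sup>2" by (rule power_mono) simp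
  then show ?thesis by simp
qed

lemma unit_inner:
  fixes u v :: "'a::euclidean_space"
  assumes "norm u = 1" "norm v = 1" "\<bar>u \<bullet> v\<bar> = 1"
  shows "u = v \<or> u = - v"
proof -
  have uu: "u \<bullet> u = 1" "v \<bullet> v = 1" using assms by (simp_all add: dot_square_norm)
  have a: "(norm (u - v))\<^sup>2 = 2 - 2 * (u \<bullet> v)"
    using uu by (simp add: power2_norm_eq_inner inner_diff_left inner_diff_right inner_commute)
  have b: "(norm (u + v))\<^sup>2 = 2 + 2 * (u \<bullet> v)"
    using uu by (simp add: power2_norm_eq_inner inner_add_left inner_add_right inner_commute)
  show ?thesis
  proof (cases "u \<bullet> v \<ge> 0")
    case True
    then have "u \<bullet> v = 1" using assms(3) by simp
    then have "norm (u - v) = 0" using a by simp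
    then show ?thesis by simp
  next
    case False
    then have "u \<bullet> v = -1" using assms(3) by simp
    then have "norm (u + v) = 0" using b by simp
    then have "u = - v" by (simp add: add_eq_0_iff2)
    then show ?thesis by simp
  qed
qed

lemma quad_bound:
  fixes lam a t d :: real
  assumes "lam > 1" "\<bar>a\<bar> \<le> (1 - d) * t" "d \<ge> 0" "b \<ge> (1 - a)\<^sup>2"
  shows "t + lam / 2 * b \<ge> 1 - 1 / (2 * lam) + lam / 2 * (1 - 1/lam - a)\<^sup>2 + d * t"
proof -
  have "t \<ge> \<bar>a\<bar> + d * t" using assms by (simp add: algebra_simps)
  moreover have "lam / 2 * b \<ge> lam / 2 * (1 - a)\<^sup>2" using assms by simp
  moreover have "a + lam / 2 * (1 - a)\<^sup>2 = 1 - 1 / (2 * lam) + lam / 2 * (1 - 1/lam - a)\<^sup>2"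
    using assms(1) by (simp add: field_simps power2_eq_square)
  ultimately show ?thesis by (smt (verit))
qed

theorem lemma2:
  fixes N :: nat and x :: "nat \<Rightarrow> 'a::euclidean_space" and lam :: real and j :: nat
  assumes unit: "\<forall>i<N. norm (x i) = 1"
    and lam: "lam > 1"
    and j: "j < N"
  shows "(\<forall>X0. X0 \<subseteq> x ` {..<N} \<longrightarrow>
            f_lam lam N x (x j) X0 \<in> {1 - 1 / (2 * lam) .. lam / 2})
       \<and> f_lam lam N x (x j) {} = lam / 2
       \<and> (\<forall>X0. X0 \<subseteq> x ` {..<N} \<longrightarrow>
            (f_lam lam N x (x j) X0 = 1 - 1 / (2 * lam) \<longleftrightarrow> x j \<in> X0 \<or> - x j \<in> X0))"
proof -
  define m where "m = 1 - 1 / (2 * lam)"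
  have xj: "norm (x j) = 1" using unit j by simp
  have mle: "m < lam / 2"
  proof -
    have "(lam - 1)\<^sup>2 > 0" using lam by simp
    then have "lam * lam - 2 * lam + 1 > 0" by (simp add: power2_eq_square algebra_simps)
    then show ?thesis unfolding m_def using lam by (simp add: field_simps)
  qed
  define F where "F X0 c = (\<Sum>i<N. \<bar>c i\<bar>) + lam / 2 * (norm (x j - (\<Sum>i\<in>{i. i < N \<and> x i \<in> X0}. c i *\<^sub>R x i)))\<^sup>2" for X0 c
  have fl: "f_lam lam N x (x j) X0 = Inf (range (F X0))" if "X0 \<noteq> {}" for X0
    using that unfolding f_lam_def F_def by (simp add: image_def)
  have lower: "F X0 c \<ge> m + lam / 2 * (1 - 1/lam - (\<Sum>i\<in>{i. i < N \<and> x i \<in> X0}. c i *\<^sub>R x i) \<bullet> x j)\<^sup>2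
       + d * (\<Sum>i<N. \<bar>c i\<bar>)"
    if "d \<ge> 0" "\<forall>i\<in>{i. i < N \<and> x i \<in> X0}. \<bar>x i \<bullet> x j\<bar> \<le> 1 - d" "d \<le> 1" for X0 c d
  proof -
    let ?S = "(\<Sum>i\<in>{i. i < N \<and> x i \<in> X0}. c i *\<^sub>R x i)"
    have "\<bar>?S \<bullet> x j\<bar> \<le> (1 - d) * (\<Sum>i<N. \<bar>c i\<bar>)"
      by (rule inner_bound) (use that in auto)
    moreover have "(1 - ?S \<bullet> x j)\<^sup>2 \<le> (norm (x j - ?S))\<^sup>2" by (rule norm_bound[OF xj])
    ultimately show ?thesis unfolding F_def m_def
      using quad_bound[OF lam _ that(1)] by blast
  qed
  have Fm: "F X0 c \<ge> m" for X0 c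
  proof -
    have "F X0 c \<ge> m + lam / 2 * (1 - 1/lam - (\<Sum>i\<in>{i. i < N \<and> x i \<in> X0}. c i *\<^sub>R x i) \<bullet> x j)\<^sup>2
       + 0 * (\<Sum>i<N. \<bar>c i\<bar>)"
      by (rule lower) (use unit xj in \<open>auto intro!: order_trans[OF Cauchy_Schwarz_ineq2]\<close>)
    moreover have "lam / 2 * (1 - 1/lam - (\<Sum>i\<in>{i. i < N \<and> x i \<in> X0}. c i *\<^sub>R x i) \<bullet> x j)\<^sup>2 \<ge> 0"
      using lam by simp
    ultimately show ?thesis by simp
  qed
  have bdd: "bdd_below (range (F X0))" for X0 using Fm by (intro bdd_belowI2) auto
  have F0: "F X0 (\<lambda>_. 0) = lam / 2" for X0 unfolding F_def using xj by simp
  have part1: "f_lam lam N x (x j) X0 \<in> {m .. lam / 2}" for X0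
  proof (cases "X0 = {}")
    case True then show ?thesis using mle by (simp add: f_lam_def)
  next
    case False
    have "Inf (range (F X0)) \<ge> m" by (rule cINF_greatest) (use Fm in auto)
    moreover have "Inf (range (F X0)) \<le> lam / 2"
      using cINF_lower[OF bdd[of X0] UNIV_I, where x="\<lambda>_. 0"] F0 by simp
    ultimately show ?thesis using fl[OF False] by simp
  qed
  have part3: "f_lam lam N x (x j) X0 = m \<longleftrightarrow> x j \<in> X0 \<or> - x j \<in> X0"
    if sub: "X0 \<subseteq> x ` {..<N}" for X0
  proof
    assume h: "x j \<in> X0 \<or> - x j \<in> X0"
    then have ne: "X0 \<noteq> {}" by auto
    obtain s :: real and k where k: "k < N" "x k \<in> X0" "x k = s *\<^sub>R x j" "\<bar>s\<bar> = 1"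
    proof (cases "x j \<in> X0")
      case True
      then obtain k where "k < N" "x k = x j" using sub by auto
      then show ?thesis using that[of k 1] True by auto
    next
      case False
      then have "- x j \<in> X0" using h by auto
      then obtain k where "k < N" "x k = - x j" "- x j \<in> X0" using sub by auto
      then show ?thesis using that[of k "-1"] by auto
    qed
    define c where "c = (\<lambda>i. if i = k then s * (1 - 1/lam) else 0)"
    have sum1: "(\<Sum>i<N. \<bar>c i\<bar>) = 1 - 1/lam"
    proof -
      have "(\<Sum>i<N. \<bar>c i\<bar>) = (\<Sum>i\<in>{k}. \<bar>c i\<bar>)"
        by (rule sum.mono_neutral_right) (use k in \<open>auto simp: c_def\<close>)
      also have "\<dots> = 1 - 1/lam" using k lam by (simp add: c_def abs_mult)
      finally show ?thesis .
    qed
    have sum2: "(\<Sum>i\<in>{i. i < N \<and> x i \<in> X0}. c i *\<^sub>R x i) = (1 - 1/lam) *\<^sub>R x j"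
    proof -
      have "(\<Sum>i\<in>{i. i < N \<and> x i \<in> X0}. c i *\<^sub>R x i) = (\<Sum>i\<in>{k}. c i *\<^sub>R x i)"
        by (rule sum.mono_neutral_right) (use k in \<open>auto simp: c_def\<close>)
      also have "\<dots> = (s * s * (1 - 1/lam)) *\<^sub>R x j" using k by (simp add: c_def)
      also have "s * s = 1" using k(4) by (metis abs_mult_self_eq mult_1_right) 
      finally show ?thesis by simp
    qed
    have "x j - (1 - 1/lam) *\<^sub>R x j = (1/lam) *\<^sub>R x j" by (simp add: algebra_simps)
    then have "norm (x j - (1 - 1/lam) *\<^sub>R x j) = 1/lam" using xj lam by simp
    then have "F X0 c = 1 - 1/lam + lam/2 * (1/lam)\<^sup>2" unfolding F_def sum1 sum2 by simp
    also have "\<dots> = m" unfolding m_def using lam by (simp add: field_simps power2_eq_square)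
    finally have "F X0 c = m" .
    then have "Inf (range (F X0)) \<le> m" using cINF_lower[OF bdd[of X0] UNIV_I, where x=c] by simp
    moreover have "Inf (range (F X0)) \<ge> m" by (rule cINF_greatest) (use Fm in auto)
    ultimately show "f_lam lam N x (x j) X0 = m" using fl[OF ne] by simp
  next
    assume eq: "f_lam lam N x (x j) X0 = m"
    show "x j \<in> X0 \<or> - x j \<in> X0"
    proof (rule ccontr)
      assume nh: "\<not> (x j \<in> X0 \<or> - x j \<in> X0)"
      have ne: "X0 \<noteq> {}" using eq mle by (auto simp: f_lam_def)
      let ?I = "{i. i < N \<and> x i \<in> X0}"
      have finI: "finite ?I" by simp
      have Ine: "?I \<noteq> {}" using ne sub by auto
      have lt1: "\<bar>x i \<bullet> x j\<bar> < 1" if "i \<in> ?I" for i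
      proof -
        have ni: "norm (x i) = 1" using that unit by simp
        have "\<bar>x i \<bullet> x j\<bar> \<le> 1" using Cauchy_Schwarz_ineq2[of "x i" "x j"] ni xj by simp
        moreover have "\<bar>x i \<bullet> x j\<bar> \<noteq> 1"
        proof
          assume "\<bar>x i \<bullet> x j\<bar> = 1"
          then have "x i = x j \<or> x i = - x j" using unit_inner[OF ni xj] by simp
          then show False using nh that by auto
        qed
        ultimately show ?thesis by simp
      qed
      define d where "d = Min ((\<lambda>i. 1 - \<bar>x i \<bullet> x j\<bar>) ` ?I)"
      have dpos: "d > 0" unfolding d_def using finI Ine lt1 by (subst Min_gr_iff) auto
      have dle: "\<forall>i\<in>?I. \<bar>x i \<bullet> x j\<bar> \<le> 1 - d"
      proof
        fix i assume "i \<in> ?I"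
        then have "d \<le> 1 - \<bar>x i \<bullet> x j\<bar>" unfolding d_def using finI
          by (intro Min_le) auto
        then show "\<bar>x i \<bullet> x j\<bar> \<le> 1 - d" by simp
      qed
      have d1: "d \<le> 1" using dle Ine by (metis abs_ge_zero all_not_in_conv diff_ge_0_iff_ge order_trans)
      define s0 where "s0 = 1 - 1/lam"
      have s0: "s0 > 0" unfolding s0_def using lam by simp
      define e where "e = min (d * s0 / 2) (lam / 2 * (s0 / 2)\<^sup>2)"
      have epos: "e > 0" unfolding e_def using dpos s0 lam by simp
      have Fe: "F X0 c \<ge> m + e" for c
      proof -
        let ?a = "(\<Sum>i\<in>?I. c i *\<^sub>R x i) \<bullet> x j"
        let ?t = "(\<Sum>i<N. \<bar>c i\<bar>)"
        have L: "F X0 c \<ge> m + lam / 2 * (s0 - ?a)\<^sup>2 + d * ?t"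
          using lower[OF _ dle d1] dpos unfolding s0_def by simp
        have ta: "\<bar>?a\<bar> \<le> ?t"
        proof -
          have "\<forall>i\<in>?I. \<bar>x i \<bullet> x j\<bar> \<le> 1" using lt1 by (simp add: less_imp_le)
          then show ?thesis using inner_bound[of ?I N x "x j" 1 c] by auto
        qed
        show ?thesis
        proof (cases "\<bar>?a\<bar> \<ge> s0 / 2")
          case True
          then have "d * ?t \<ge> d * s0 / 2" using ta dpos
            by (metis mult_left_mono order_trans less_imp_le times_divide_eq_right)
          moreover have "lam / 2 * (s0 - ?a)\<^sup>2 \<ge> 0" using lam by simp
          ultimately show ?thesis using L unfolding e_def by linarith
        next
          case False
          then have "s0 - ?a \<ge> s0 / 2" by simp
          then have "(s0 - ?a)\<^sup>2 \<ge> (s0 / 2)\<^sup>2" using s0 by (intro power_mono) auto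
          then have "lam / 2 * (s0 - ?a)\<^sup>2 \<ge> lam / 2 * (s0 / 2)\<^sup>2" using lam by simp
          moreover have "d * ?t \<ge> 0" using dpos by simp
          ultimately show ?thesis using L unfolding e_def by linarith
        qed
      qed
      have "Inf (range (F X0)) \<ge> m + e" by (rule cINF_greatest) (use Fe in auto)
      then show False using eq fl[OF ne] epos by simp
    qed
  qed
  show ?thesis using part1 part3 unfolding m_def by (simp add: f_lam_def)
qed

end
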